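(* Let $k \ge 2$ be an integer. Among $2^k$ identical-looking coins, exactly two of which are counterfeit, there is an adaptive strategy that determines both counterfeit coins using at most $k+1$ weighings on a 5-way scale.
   Context: Coins look identical; all genuine coins have one common weight, all counterfeit coins have one common weight strictly less than the genuine weight. A weighing places two disjoint sets of coins of equal cardinality on the left and right pans. Let $d$ = (number of counterfeit coins on the left pan) $-$ (number of counterfeit coins on the right pan). A 5-way scale reports MUCH LESS if $d \ge 2$, LESS if $d = 1$, EQUAL if $d = 0$, MORE if $d = -1$, MUCH MORE if $d \le -2$. A strategy chooses each weighing possibly depending on previous outcomes; it determines the counterfeit coins if the sequence of outcomes uniquely identifies the set of counterfeit coins. *)

theory Defs
  imports Main
begin

datatype outcome = MuchLess | Less | Equal | More | MuchMore

definition weigh :: "nat set \<Rightarrow> nat set \<Rightarrow> nat set \<Rightarrow> outcome" where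
  "weigh L R C = (let d = int (card (C \<inter> L)) - int (card (C \<inter> R)) in
     if d \<ge> 2 then MuchLess else if d = 1 then Less else if d = 0 then Equal
     else if d = -1 then More else MuchMore)"

datatype strategy = Stop | Weigh "nat set" "nat set" "outcome \<Rightarrow> strategy"

primrec run :: "strategy \<Rightarrow> nat set \<Rightarrow> outcome list" where
  "run Stop C = []"
| "run (Weigh L R f) C = weigh L R C # run (f (weigh L R C)) C"

primrec legal :: "nat \<Rightarrow> strategy \<Rightarrow> bool" where
  "legal N Stop = True"
| "legal N (Weigh L R f) = (L \<subseteq> {0..<N} \<and> R \<subseteq> {0..<N} \<and> L \<inter> R = {} \<and>
      card L = card R \<and> (\<forall>r. legal N (f r)))"

end

theory Submission
  imports Defs
begin

definition solves :: "nat \<Rightarrow> strategy \<Rightarrow> nat set set \<Rightarrow> nat \<Rightarrow> bool" where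
  "solves N s F n \<longleftrightarrow> legal N s \<and> (\<forall>C\<in>F. length (run s C) \<le> n)
     \<and> (\<forall>C1\<in>F. \<forall>C2\<in>F. run s C1 = run s C2 \<longrightarrow> C1 = C2)"

lemma solves_mono: "solves N s F' n \<Longrightarrow> F \<subseteq> F' \<Longrightarrow> n \<le> m \<Longrightarrow> solves N s F m"
  unfolding solves_def by (meson order_trans subsetD)

lemma solves_stop: "(\<forall>C1\<in>F. \<forall>C2\<in>F. C1 = C2) \<Longrightarrow> solves N Stop F n"
  unfolding solves_def by simp

lemma solves_empty: "\<exists>s. solves N s {} n"
  using solves_stop by blast

lemma solves_emptyI: "(\<And>C. C \<in> F \<Longrightarrow> False) \<Longrightarrow> \<exists>s. solves N s F n"
  using solves_stop by blast

lemma solves_weighI: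
  assumes "L \<subseteq> {0..<N}" "R \<subseteq> {0..<N}" "L \<inter> R = {}" "card L = card R"
    and "\<And>r. \<exists>s. solves N s {C\<in>F. weigh L R C = r} n"
  shows "\<exists>s. solves N s F (Suc n)"
proof -
  from assms(5) have "\<forall>r. \<exists>s. solves N s {C\<in>F. weigh L R C = r} n" by blast
  then obtain f where f: "\<And>r. solves N (f r) {C\<in>F. weigh L R C = r} n"
    by metis
  have "solves N (Weigh L R f) F (Suc n)"
    unfolding solves_def
  proof (intro conjI ballI impI)
    show "legal N (Weigh L R f)" using assms f by (simp add: solves_def)
  next
    fix C assume "C \<in> F"
    then show "length (run (Weigh L R f) C) \<le> Suc n"
      using f[of "weigh L R C"] by (simp add: solves_def)
  next
    fix C1 C2 assume c: "C1 \<in> F" "C2 \<in> F" "run (Weigh L R f) C1 = run (Weigh L R f) C2"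
    then have w: "weigh L R C1 = weigh L R C2" by simp
    with c have "run (f (weigh L R C1)) C1 = run (f (weigh L R C1)) C2" by simp
    with f[of "weigh L R C1"] c w show "C1 = C2" by (simp add: solves_def)
  qed
  then show ?thesis by blast
qed

lemma card_pair_inter:
  "a \<noteq> b \<Longrightarrow> card ({a,b} \<inter> L) = (if a \<in> L then 1 else 0) + (if b \<in> L then 1 else 0)"
  by (cases "a \<in> L"; cases "b \<in> L") (auto simp: Int_insert_left)

lemma halve:
  assumes "card S = 2 ^ Suc i"
  obtains A B where "A \<union> B = S" "A \<inter> B = {}" "card A = 2 ^ i" "card B = 2 ^ i"
proof -
  obtain A where A: "A \<subseteq> S" "card A = 2 ^ i" using assms obtain_subset_with_card_n[of "2^i" S]
    by force
  have fin: "finite S" using assms card.infinite by force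
  have "card (S - A) = 2 ^ i" using A assms fin by (simp add: card_Diff_subset finite_subset)
  then show ?thesis using that[of A "S - A"] A by blast
qed

definition prodf :: "nat set \<Rightarrow> nat set \<Rightarrow> nat set set" where
  "prodf A B = {{a,b} | a b. a \<in> A \<and> b \<in> B}"


lemma pg:
  assumes "p \<le> q" "card A = 2 ^ p" "card B = 2 ^ q" "A \<inter> B = {}" "A \<inter> G = {}" "B \<inter> G = {}"
    "A \<subseteq> {0..<N}" "B \<subseteq> {0..<N}" "G \<subseteq> {0..<N}" "2 ^ (q - 1) \<le> card G"
  shows "\<exists>s. solves N s (prodf A B) q"
  using assms
proof (induction q arbitrary: p A B)
  case 0
  then have "p = 0" by simp
  with 0 obtain a b where "A = {a}" "B = {b}" by (metis card_1_singletonE power_0)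
  then have "prodf A B = {{a,b}}" unfolding prodf_def by blast
  then show ?case using solves_stop by (metis singletonD)
next
  case (Suc q)
  obtain Ba Bb where B: "Ba \<union> Bb = B" "Ba \<inter> Bb = {}" "card Ba = 2 ^ q" "card Bb = 2 ^ q"
    using halve[OF Suc.prems(3)] by blast
  show ?case
  proof (cases p)
    case 0
    with Suc.prems obtain a where a: "A = {a}" by (metis card_1_singletonE power_0)
    have ih: "\<exists>s. solves N s (prodf A X) q" if "X \<subseteq> B" "card X = 2 ^ q" for X
      apply (rule Suc.IH[of 0])
      using Suc.prems that 0 by (auto simp: le_diff_conv2 intro: order_trans[OF _ Suc.prems(10)])
    show ?thesis
    proof (rule solves_weighI[of Ba N Bb])
      show "Ba \<subseteq> {0..<N}" "Bb \<subseteq> {0..<N}" "Ba \<inter> Bb = {}" "card Ba = card Bb"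
        using B Suc.prems by auto
      fix r
      have key: "weigh Ba Bb C = (if b \<in> Ba then Less else More)"
        if "C = {a,b}" "b \<in> B" for C b
      proof -
        have "a \<noteq> b" "a \<notin> Ba" "a \<notin> Bb" using that a Suc.prems(4) B(1) by auto
        then show ?thesis using that B by (auto simp: weigh_def card_pair_inter)
      qed
      show "\<exists>s. solves N s {C \<in> prodf A B. weigh Ba Bb C = r} q"
      proof (cases r)
        case Less
        have "{C \<in> prodf A B. weigh Ba Bb C = r} \<subseteq> prodf A Ba"
          using key Less a B(1) unfolding prodf_def by (auto split: if_splits)
        then show ?thesis using ih[of Ba] B solves_mono by blast
      next
        case More
        have "{C \<in> prodf A B. weigh Ba Bb C = r} \<subseteq> prodf A Bb"
          using key More a B(1) unfolding prodf_def by (auto split: if_splits)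
        then show ?thesis using ih[of Bb] B solves_mono by blast
      qed (rule solves_emptyI, use key a in \<open>auto simp: prodf_def split: if_splits\<close>)+
    qed
  next
    case (Suc p')
    obtain Aa Ab where A: "Aa \<union> Ab = A" "Aa \<inter> Ab = {}" "card Aa = 2 ^ p'" "card Ab = 2 ^ p'"
      using halve[of A p'] Suc.prems(2) Suc by blast
    obtain G' where G': "G' \<subseteq> G" "card G' = 2 ^ q"
      using obtain_subset_with_card_n[of "2^q" G] Suc.prems(10) by auto
    have ih: "\<exists>s. solves N s (prodf X Y) q"
      if "X \<subseteq> A" "card X = 2 ^ p'" "Y \<subseteq> B" "card Y = 2 ^ q" for X Y
      apply (rule Suc.IH[of p'])
      using Suc.prems that \<open>p = Suc p'\<close>
      by (auto intro: order_trans[OF _ Suc.prems(10)])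
    have fin: "finite Aa" "finite Ba" "finite Ab" "finite G'"
      using A B G' by (auto intro: card_ge_0_finite)
    show ?thesis
    proof (rule solves_weighI[of "Aa \<union> Ba" N "Ab \<union> G'"])
      show "Aa \<union> Ba \<subseteq> {0..<N}" "Ab \<union> G' \<subseteq> {0..<N}"
        using A B G' Suc.prems by auto
      show "(Aa \<union> Ba) \<inter> (Ab \<union> G') = {}"
        using A B G' Suc.prems(4-6) by blast
      have "Aa \<inter> Ba = {}" "Ab \<inter> G' = {}" using A B G' Suc.prems(4-6) by blast+
      then show "card (Aa \<union> Ba) = card (Ab \<union> G')"
        using A B G' fin by (simp add: card_Un_disjoint)
      fix r
      have key: "weigh (Aa \<union> Ba) (Ab \<union> G') C = (if a \<in> Aa then (if b \<in> Ba then MuchLess else Less)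
                    else (if b \<in> Ba then Equal else More))"
        if "C = {a,b}" "a \<in> A" "b \<in> B" for C a b
      proof -
        have "a \<noteq> b" "a \<notin> Ba" "a \<notin> Bb" "b \<notin> Aa" "b \<notin> Ab" "b \<notin> G'" "a \<notin> G'"
          using that A B G' Suc.prems(4-6) by blast+
        then show ?thesis using that A B by (auto simp: weigh_def card_pair_inter)
      qed
      have sub: "{C \<in> prodf A B. weigh (Aa \<union> Ba) (Ab \<union> G') C = r} \<subseteq> prodf X Y"
        if "\<And>a b. a \<in> A \<Longrightarrow> b \<in> B \<Longrightarrow> weigh (Aa \<union> Ba) (Ab \<union> G') {a,b} = r \<Longrightarrow> a \<in> X \<and> b \<in> Y"
        for X Y
        using that unfolding prodf_def by blast
      show "\<exists>s. solves N s {C \<in> prodf A B. weigh (Aa \<union> Ba) (Ab \<union> G') C = r} q"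
      proof (cases r)
        case MuchLess
        have "{C \<in> prodf A B. weigh (Aa \<union> Ba) (Ab \<union> G') C = r} \<subseteq> prodf Aa Ba"
          by (rule sub) (use key MuchLess A B in \<open>auto split: if_splits\<close>)
        then show ?thesis using ih[of Aa Ba] A B solves_mono by blast
      next
        case Less
        have "{C \<in> prodf A B. weigh (Aa \<union> Ba) (Ab \<union> G') C = r} \<subseteq> prodf Aa Bb"
          by (rule sub) (use key Less A B in \<open>auto split: if_splits\<close>)
        then show ?thesis using ih[of Aa Bb] A B solves_mono by blast
      next
        case Equal
        have "{C \<in> prodf A B. weigh (Aa \<union> Ba) (Ab \<union> G') C = r} \<subseteq> prodf Ab Ba"
          by (rule sub) (use key Equal A B in \<open>auto split: if_splits\<close>)
        then show ?thesis using ih[of Ab Ba] A B solves_mono by blast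
      next
        case More
        have "{C \<in> prodf A B. weigh (Aa \<union> Ba) (Ab \<union> G') C = r} \<subseteq> prodf Ab Bb"
          by (rule sub) (use key More A B in \<open>auto split: if_splits\<close>)
        then show ?thesis using ih[of Ab Bb] A B solves_mono by blast
      next
        case MuchMore
        show ?thesis
          by (rule solves_emptyI) (use key MuchMore in \<open>auto simp: prodf_def split: if_splits\<close>)
      qed
    qed
  qed
qed

lemma prodf_subI: "(\<And>a b. a \<in> A \<Longrightarrow> b \<in> B \<Longrightarrow> P {a,b} \<Longrightarrow> a \<in> X \<and> b \<in> Y) \<Longrightarrow> {C \<in> prodf A B. P C} \<subseteq> prodf X Y"
  unfolding prodf_def by blast

lemma prodlem:
  assumes "card A = 2 ^ j" "card B = 2 ^ j" "A \<inter> B = {}" "A \<subseteq> {0..<N}" "B \<subseteq> {0..<N}"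
  shows "\<exists>s. solves N s (prodf A B) (Suc j)"
proof (cases j)
  case 0
  with assms obtain a b where "A = {a}" "B = {b}" by (metis card_1_singletonE power_0)
  then have "prodf A B = {{a,b}}" unfolding prodf_def by blast
  then show ?thesis using solves_stop by (metis singletonD)
next
  case (Suc i)
  obtain A1 A2 where A: "A1 \<union> A2 = A" "A1 \<inter> A2 = {}" "card A1 = 2 ^ i" "card A2 = 2 ^ i"
    using halve[of A i] assms(1) Suc by blast
  have pg1: "\<exists>s. solves N s (prodf X B) j" if "X \<union> Y = A" "X \<inter> Y = {}" "card X = 2 ^ i" "card Y = 2 ^ i" for X Y
    by (rule pg[of i j X B Y]) (use that assms Suc in auto)
  have fin: "finite A1" "finite A2" using A by (auto intro: card_ge_0_finite)
  show ?thesis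
  proof (rule solves_weighI[of A1 N A2])
    show "A1 \<subseteq> {0..<N}" "A2 \<subseteq> {0..<N}" "A1 \<inter> A2 = {}" "card A1 = card A2"
      using A assms by auto
    fix r
    have key: "weigh A1 A2 C = (if a \<in> A1 then Less else More)"
      if "C = {a,b}" "a \<in> A" "b \<in> B" for C a b
    proof -
      have "a \<noteq> b" "b \<notin> A1" "b \<notin> A2" using that A assms(3) by blast+
      then show ?thesis using that A by (auto simp: weigh_def card_pair_inter)
    qed
    show "\<exists>s. solves N s {C \<in> prodf A B. weigh A1 A2 C = r} j"
    proof (cases r)
      case Less
      have "{C \<in> prodf A B. weigh A1 A2 C = r} \<subseteq> prodf A1 B"
        by (rule prodf_subI) (use key Less in \<open>auto split: if_splits\<close>)
      then show ?thesis using pg1[of A1 A2] A solves_mono by blast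
    next
      case More
      have "{C \<in> prodf A B. weigh A1 A2 C = r} \<subseteq> prodf A2 B"
        by (rule prodf_subI) (use key More A(1) in \<open>auto split: if_splits\<close>)
      then show ?thesis using pg1[of A2 A1] A solves_mono by (metis Int_commute sup_commute order_refl)
    qed (rule solves_emptyI, use key in \<open>auto simp: prodf_def split: if_splits\<close>)+
  qed
qed

definition pairs :: "nat set \<Rightarrow> nat set set" where
  "pairs S = {C. C \<subseteq> S \<and> card C = 2}"

lemma pairslem:
  assumes "card S = 2 ^ j" "1 \<le> j" "S \<subseteq> {0..<N}"
  shows "\<exists>s. solves N s (pairs S) (Suc j)"
  using assms
proof (induction j arbitrary: S)
  case 0
  then show ?case by simp
next
  case (Suc j S)
  show ?case
  proof (cases j)
    case 0
    have fin: "finite S" using Suc.prems by (auto intro: card_ge_0_finite)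
    have "\<forall>C1\<in>pairs S. \<forall>C2\<in>pairs S. C1 = C2"
      unfolding pairs_def using Suc.prems 0 fin by (auto dest: card_subset_eq)
    then show ?thesis using solves_stop by blast
  next
    case (Suc i)
    obtain A B where AB: "A \<union> B = S" "A \<inter> B = {}" "card A = 2 ^ j" "card B = 2 ^ j"
      using halve[of S j] Suc.prems(1) by blast
    have j1: "1 \<le> j" using Suc by simp
    have fin: "finite A" "finite B" using AB by (auto intro: card_ge_0_finite)
    show ?thesis
    proof (rule solves_weighI[of A N B])
      show "A \<subseteq> {0..<N}" "B \<subseteq> {0..<N}" "A \<inter> B = {}" "card A = card B"
        using AB Suc.prems by auto
      fix r
      have key: "weigh A B C = (if C \<subseteq> A then MuchLess else if C \<subseteq> B then MuchMore else Equal)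
               \<and> (\<not> C \<subseteq> A \<and> \<not> C \<subseteq> B \<longrightarrow> C \<in> prodf A B)"
        if "C \<in> pairs S" for C
      proof -
        have "card C = 2" using that by (simp add: pairs_def)
        then obtain x y where xy: "C = {x,y}" "x \<noteq> y" by (auto simp: card_2_iff)
        have "x \<in> S" "y \<in> S" using that xy unfolding pairs_def by auto
        then have "x \<in> A \<and> x \<notin> B \<or> x \<in> B \<and> x \<notin> A" "y \<in> A \<and> y \<notin> B \<or> y \<in> B \<and> y \<notin> A"
          using AB by blast+
        then show ?thesis using xy
          by (auto simp: weigh_def card_pair_inter prodf_def insert_commute)
      qed
      show "\<exists>s. solves N s {C \<in> pairs S. weigh A B C = r} (Suc j)"
      proof (cases r)
        case MuchLess
        have "{C \<in> pairs S. weigh A B C = r} \<subseteq> pairs A"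
          using key MuchLess unfolding pairs_def by (auto split: if_splits)
        then show ?thesis using Suc.IH[of A] AB Suc.prems j1 solves_mono by blast
      next
        case MuchMore
        have "{C \<in> pairs S. weigh A B C = r} \<subseteq> pairs B"
          using key MuchMore unfolding pairs_def by (auto split: if_splits)
        then show ?thesis using Suc.IH[of B] AB Suc.prems j1 solves_mono by blast
      next
        case Equal
        have "{C \<in> pairs S. weigh A B C = r} \<subseteq> prodf A B"
          using key Equal by (auto split: if_splits)
        then show ?thesis using prodlem[of A j B N] AB Suc.prems solves_mono by blast
      qed (rule solves_emptyI, use key in \<open>auto split: if_splits\<close>)+
    qed
  qed
qed

theorem mainTheorem7:
  fixes k :: nat
  assumes "k \<ge> 2"
  shows "\<exists>s. legal (2 ^ k) s
    \<and> (\<forall>C. C \<subseteq> {0..<2 ^ k} \<and> card C = 2 \<longrightarrow> length (run s C) \<le> k + 1)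
    \<and> (\<forall>C1 C2. C1 \<subseteq> {0..<2 ^ k} \<and> card C1 = 2 \<and> C2 \<subseteq> {0..<2 ^ k} \<and> card C2 = 2
          \<and> run s C1 = run s C2 \<longrightarrow> C1 = C2)"
proof -
  obtain s where "solves (2 ^ k) s (pairs {0..<2 ^ k}) (Suc k)"
    using pairslem[of "{0..<2 ^ k}" k "2 ^ k"] assms by auto
  then show ?thesis unfolding solves_def pairs_def by (intro exI[of _ s]) auto
qed

end
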